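(* Let $n\ge 3$ and $m\ge 2n$. Then the set \[D=\{(i,2i-1),(i,2i): i\in[n-1]\}\cup\{(n,j): 2n-1\le j\le m-1\}\] is an identifying code of $K_n\times K_m$.
   Context: $K_n\times K_m$ is the direct product of complete graphs: vertex set $[n]\times[m]$, with $(i,r)$ adjacent to $(j,s)$ iff $i\ne j$ and $r \ne s$. An identifying code is a dominating set $C$ with $N[x]\cap C\ne N[y]\cap C$ for all distinct vertices $x,y$ ($N[x]$ the closed neighborhood). *)

theory Defs
  imports Main
begin

text \<open>Direct product of complete graphs K_n x K_m on vertex set [n] x [m].\<close>

definition KV :: "nat \<Rightarrow> nat \<Rightarrow> (nat \<times> nat) set" where
  "KV n m = {1..n} \<times> {1..m}"

definition Kadj :: "nat \<times> nat \<Rightarrow> nat \<times> nat \<Rightarrow> bool" where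
  "Kadj x y \<longleftrightarrow> fst x \<noteq> fst y \<and> snd x \<noteq> snd y"

definition closed_nbhd :: "nat \<Rightarrow> nat \<Rightarrow> nat \<times> nat \<Rightarrow> (nat \<times> nat) set" where
  "closed_nbhd n m x = {y \<in> KV n m. y = x \<or> Kadj x y}"

definition identifying_code :: "nat \<Rightarrow> nat \<Rightarrow> (nat \<times> nat) set \<Rightarrow> bool" where
  "identifying_code n m C \<longleftrightarrow>
     C \<subseteq> KV n m \<and>
     (\<forall>x \<in> KV n m. closed_nbhd n m x \<inter> C \<noteq> {}) \<and>
     (\<forall>x \<in> KV n m. \<forall>y \<in> KV n m. x \<noteq> y \<longrightarrow>
        closed_nbhd n m x \<inter> C \<noteq> closed_nbhd n m y \<inter> C)"

end

theory Submission
  imports Defs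
begin

definition rr :: "nat \<Rightarrow> nat \<Rightarrow> nat" where
  "rr n c = (if c \<le> 2*n-2 then (c+1) div 2 else n)"

lemma rr_range: "n \<ge> 3 \<Longrightarrow> 1 \<le> c \<Longrightarrow> 1 \<le> rr n c \<and> rr n c \<le> n"
  unfolding rr_def by auto

lemma memD:
  assumes "n \<ge> 3" "m \<ge> 2*n"
  shows "(p,c) \<in> ({(i, 2*i - 1) | i. i \<in> {1..n-1}} \<union> {(i, 2*i) | i. i \<in> {1..n-1}}
            \<union> {(n, j) | j. 2*n - 1 \<le> j \<and> j \<le> m - 1})
     \<longleftrightarrow> 1 \<le> c \<and> c \<le> m-1 \<and> p = rr n c"
proof
  assume "(p,c) \<in> ({(i, 2*i - 1) | i. i \<in> {1..n-1}} \<union> {(i, 2*i) | i. i \<in> {1..n-1}}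
            \<union> {(n, j) | j. 2*n - 1 \<le> j \<and> j \<le> m - 1})"
  then show "1 \<le> c \<and> c \<le> m-1 \<and> p = rr n c"
    using assms unfolding rr_def by auto
next
  assume h: "1 \<le> c \<and> c \<le> m-1 \<and> p = rr n c"
  show "(p,c) \<in> ({(i, 2*i - 1) | i. i \<in> {1..n-1}} \<union> {(i, 2*i) | i. i \<in> {1..n-1}}
            \<union> {(n, j) | j. 2*n - 1 \<le> j \<and> j \<le> m - 1})"
  proof (cases "c \<le> 2*n-2")
    case True
    then have p: "p = (c+1) div 2" using h unfolding rr_def by auto
    show ?thesis
    proof (cases "even c")
      case True
      then have "c = 2*p" "p \<in> {1..n-1}" using p h \<open>c \<le> 2*n-2\<close> by auto
      then show ?thesis by auto
    next
      case False
      then have "c = 2*p - 1" "1 \<le> p" "p \<le> n-1" using p h \<open>c \<le> 2*n-2\<close> by presburger+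
      then show ?thesis by auto
    qed
  next
    case False
    then show ?thesis using h assms unfolding rr_def by auto
  qed
qed

lemma nbhd:
  assumes "n \<ge> 3" "m \<ge> 2*n" "(a,b) \<in> KV n m" "1 \<le> c" "c \<le> m-1"
  shows "(rr n c, c) \<in> closed_nbhd n m (a,b) \<longleftrightarrow> ((c = b) = (rr n c = a))"
  using assms rr_range[of n c] unfolding closed_nbhd_def KV_def Kadj_def by auto

theorem mainTheorem14:
  fixes n m :: nat
  assumes "n \<ge> 3" and "m \<ge> 2 * n"
  shows "identifying_code n m
           ({(i, 2*i - 1) | i. i \<in> {1..n-1}} \<union> {(i, 2*i) | i. i \<in> {1..n-1}}
            \<union> {(n, j) | j. 2*n - 1 \<le> j \<and> j \<le> m - 1})"
proof -
  define D where "D = ({(i, 2*i - 1) | i. i \<in> {1..n-1}} \<union> {(i, 2*i) | i. i \<in> {1..n-1}}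
            \<union> {(n, j) | j. 2*n - 1 \<le> j \<and> j \<le> m - 1})"
  have mem: "\<And>p c. (p,c) \<in> D \<longleftrightarrow> 1 \<le> c \<and> c \<le> m-1 \<and> p = rr n c"
    unfolding D_def by (rule memD[OF assms])
  have sub: "D \<subseteq> KV n m"
  proof
    fix x assume "x \<in> D"
    then obtain p c where x: "x = (p,c)" and "1 \<le> c \<and> c \<le> m-1 \<and> p = rr n c"
      using mem by (cases x) auto
    then show "x \<in> KV n m" using rr_range[of n c] assms unfolding KV_def by auto
  qed
  have key: "(rr n c, c) \<in> closed_nbhd n m (a,b) \<inter> D \<longleftrightarrow> ((c = b) = (rr n c = a))"
    if "(a,b) \<in> KV n m" "1 \<le> c" "c \<le> m-1" for a b c
  proof -
    have "(rr n c, c) \<in> D" using mem that by simp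
    then show ?thesis using nbhd[OF assms that] by simp
  qed
  have r1: "rr n 1 = 1" "rr n 2 = 1" "rr n 3 = 2" "rr n 4 = 2"
    using assms unfolding rr_def by auto
  have dom: "\<forall>x \<in> KV n m. closed_nbhd n m x \<inter> D \<noteq> {}"
  proof
    fix x assume xK: "x \<in> KV n m"
    obtain a b where x: "x = (a,b)" by (cases x)
    have "\<exists>c. 1 \<le> c \<and> c \<le> m-1 \<and> ((c = b) = (rr n c = a))"
    proof (cases "a = 1")
      case True
      show ?thesis
      proof (cases "b = 3")
        case True
        then show ?thesis using r1 assms \<open>a = 1\<close> by (intro exI[of _ 4]) auto
      next
        case False
        then show ?thesis using r1 assms \<open>a = 1\<close> by (intro exI[of _ 3]) auto
      qed
    next
      case False
      show ?thesis
      proof (cases "b = 1")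
        case True
        then show ?thesis using r1 assms \<open>a \<noteq> 1\<close> by (intro exI[of _ 2]) auto
      next
        case False
        then show ?thesis using r1 assms \<open>a \<noteq> 1\<close> by (intro exI[of _ 1]) auto
      qed
    qed
    then obtain c where "1 \<le> c" "c \<le> m-1" "(c = b) = (rr n c = a)" by blast
    then have "(rr n c, c) \<in> closed_nbhd n m x \<inter> D" using key xK x by blast
    then show "closed_nbhd n m x \<inter> D \<noteq> {}" by blast
  qed
  have rrA: "\<And>i. 1 \<le> i \<Longrightarrow> i \<le> n-1 \<Longrightarrow> rr n (2*i-1) = i \<and> rr n (2*i) = i"
    unfolding rr_def by auto
  have rrB: "rr n (2*n-1) = n" unfolding rr_def by auto
  have three: "\<And>(c1::nat) c2 c3 b b'. c1 \<noteq> c2 \<Longrightarrow> c1 \<noteq> c3 \<Longrightarrow> c2 \<noteq> c3 \<Longrightarrow>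
      \<exists>c\<in>{c1,c2,c3}. c \<noteq> b \<and> c \<noteq> b'" by auto
  have sep: "\<forall>x \<in> KV n m. \<forall>y \<in> KV n m. x \<noteq> y \<longrightarrow>
        closed_nbhd n m x \<inter> D \<noteq> closed_nbhd n m y \<inter> D"
  proof (intro ballI impI)
    fix x y assume xK: "x \<in> KV n m" and yK: "y \<in> KV n m" and xy: "x \<noteq> y"
    obtain a b where x: "x = (a,b)" by (cases x)
    obtain a' b' where y: "y = (a',b')" by (cases y)
    have ab: "1 \<le> a" "a \<le> n" "1 \<le> b" "b \<le> m" "1 \<le> a'" "a' \<le> n" "1 \<le> b'" "b' \<le> m"
      using xK yK x y unfolding KV_def by auto
    have "\<exists>c. 1 \<le> c \<and> c \<le> m-1 \<and> ((c = b) = (rr n c = a)) \<noteq> ((c = b') = (rr n c = a'))"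
    proof (cases "a = a'")
      case True
      then have "b \<noteq> b'" using xy x y by auto
      show ?thesis
      proof (cases "b \<le> m-1")
        case True
        then show ?thesis using ab \<open>b \<noteq> b'\<close> \<open>a = a'\<close> by (intro exI[of _ b]) auto
      next
        case False
        then have "b' \<le> m-1" using ab \<open>b \<noteq> b'\<close> by auto
        then show ?thesis using ab \<open>b \<noteq> b'\<close> \<open>a = a'\<close> by (intro exI[of _ b']) auto
      qed
    next
      case False
      have "\<exists>c. 1 \<le> c \<and> c \<le> m-1 \<and> (rr n c = a \<or> rr n c = a') \<and> c \<noteq> b \<and> c \<noteq> b'"
      proof (cases "a < n")
        case True
        define c3 where "c3 = (if a' < n then 2*a'-1 else 2*n-1)"
        have c3: "1 \<le> c3 \<and> c3 \<le> m-1 \<and> rr n c3 = a'"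
          unfolding c3_def using rrA[of a'] rrB ab assms by auto
        have d: "2*a-1 \<noteq> 2*a" "2*a-1 \<noteq> c3" "2*a \<noteq> c3"
          unfolding c3_def using ab True \<open>a \<noteq> a'\<close> by auto
        obtain c where cc: "c \<in> {2*a-1, 2*a, c3}" "c \<noteq> b \<and> c \<noteq> b'"
          using three[OF d] by blast
        have ra: "rr n (2*a-1) = a \<and> rr n (2*a) = a" using rrA[of a] ab True by auto
        have "1 \<le> c \<and> c \<le> m-1 \<and> (rr n c = a \<or> rr n c = a')"
          using cc(1) c3 ra ab True assms by auto
        then show ?thesis using cc(2) by blast
      next
        case False
        then have an: "a = n" "a' < n" using ab \<open>a \<noteq> a'\<close> by auto
        have d: "2*a'-1 \<noteq> 2*a'" "2*a'-1 \<noteq> 2*n-1" "2*a' \<noteq> 2*n-1"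
          using ab an by auto
        obtain c where cc: "c \<in> {2*a'-1, 2*a', 2*n-1}" "c \<noteq> b \<and> c \<noteq> b'"
          using three[OF d] by blast
        have ra: "rr n (2*a'-1) = a' \<and> rr n (2*a') = a'" using rrA[of a'] ab an by auto
        have "1 \<le> c \<and> c \<le> m-1 \<and> (rr n c = a \<or> rr n c = a')"
          using cc(1) rrB ra ab an assms by auto
        then show ?thesis using cc(2) by blast
      qed
      then obtain c where "1 \<le> c" "c \<le> m-1" "rr n c = a \<or> rr n c = a'" "c \<noteq> b" "c \<noteq> b'"
        by blast
      then show ?thesis using \<open>a \<noteq> a'\<close> by (intro exI[of _ c]) auto
    qed
    then obtain c where c: "1 \<le> c" "c \<le> m-1"
      "((c = b) = (rr n c = a)) \<noteq> ((c = b') = (rr n c = a'))" by blast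
    have "(rr n c, c) \<in> closed_nbhd n m x \<inter> D \<longleftrightarrow> ((c = b) = (rr n c = a))"
      using key xK x c by blast
    moreover have "(rr n c, c) \<in> closed_nbhd n m y \<inter> D \<longleftrightarrow> ((c = b') = (rr n c = a'))"
      using key yK y c by blast
    ultimately show "closed_nbhd n m x \<inter> D \<noteq> closed_nbhd n m y \<inter> D" using c(3) by auto
  qed
  show ?thesis unfolding D_def[symmetric] identifying_code_def using sub dom sep by blast
qed

end
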